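(* Let $\mathbf k$ be an algebraically closed field of characteristic zero, $n\geq 1$, $\zeta\in\mathbf k$ an $n$-th root of unity, and let $F:\mathcal D_{\zeta,n}\to\langle\delta_1\rangle$ be the functor defined below. Then for every $k\in\mathbb N$ the induced map $\mathrm{Hom}_{\mathcal D_{\zeta,n}}(k,0)\to\mathrm{Hom}_{\mathrm{Vec}_{\mathbb Z_n}^{\zeta}}(\delta_1^{\otimes k},\mathbf 1)$ is injective.
   Context: $\mathrm{Vec}_{\mathbb Z_n}^{\zeta}$ is the fusion category of finite-dimensional $\mathbb Z_n$-graded $\mathbf k$-vector spaces with graded tensor product, unit $\mathbf 1=\delta_0$, unit isomorphisms identities, and associativity on $(\delta_a\otimes\delta_b)\otimes\delta_c$ given by multiplication by $\zeta^{\,a(b+c-\overline{b+c})/n}$ ($a,b,c\in\{0,\dots,n-1\}$, $\overline{m}$ the remainder of $m$ mod $n$); $\delta_a$ is the simple object concentrated in degree $a$. $\langle\delta_1\rangle$ is the full monoidal subcategory of $\mathrm{Vec}_{\mathbb Z_n}^{\zeta}$ with objects $\delta_1^{\otimes k}$, $k\in\mathbb N$. $\mathcal D_{\zeta,n}$ is the strict $\mathbf k$-linear monoidal category with objects $k\in\mathbb N$, $k\otimes l=k+l$, unit $0$, whose morphisms are generated under composition, tensor product and linear combinations by $\mathrm{id}_1$, $f_n:n\to 0$ and $g_n:0\to n$, subject to $f_n\circ g_n=\mathrm{id}_0$, $g_n\circ f_n=\mathrm{id}_n$, and $\mathrm{id}_1\otimes f_n=\zeta\,(f_n\otimes\mathrm{id}_1)$.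 The $\mathbf k$-linear monoidal functor $F$ is defined by $F(1)=\delta_1$, $F(f_n)=\lambda$ the canonical isomorphism $\delta_1^{\otimes n}\xrightarrow{\sim}\mathbf 1$, and $F(g_n)=\lambda^{-1}$. *)

theory Defs
  imports Complex_Main "HOL-Computational_Algebra.Polynomial"
begin

definition alg_closed :: "'k::field itself \<Rightarrow> bool" where
  "alg_closed _ \<longleftrightarrow> (\<forall>p :: 'k poly. degree p > 0 \<longrightarrow> (\<exists>x. poly p x = 0))"

text \<open>Raw morphism terms built from identities, f_n, g_n, composition and tensor.
  DComp a b stands for a composed after b.  DId k is the identity of object k.\<close>

datatype dterm = DId nat | Df | Dg | DComp dterm dterm | DTens dterm dterm

fun ddom :: "nat \<Rightarrow> dterm \<Rightarrow> nat" and dcod :: "nat \<Rightarrow> dterm \<Rightarrow> nat" where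
  "ddom n (DId k) = k"
| "ddom n Df = n"
| "ddom n Dg = 0"
| "ddom n (DComp a b) = ddom n b"
| "ddom n (DTens a b) = ddom n a + ddom n b"
| "dcod n (DId k) = k"
| "dcod n Df = 0"
| "dcod n Dg = n"
| "dcod n (DComp a b) = dcod n a"
| "dcod n (DTens a b) = dcod n a + dcod n b"

fun dwt :: "nat \<Rightarrow> dterm \<Rightarrow> bool" where
  "dwt n (DComp a b) = (dwt n a \<and> dwt n b \<and> ddom n a = dcod n b)"
| "dwt n (DTens a b) = (dwt n a \<and> dwt n b)"
| "dwt n _ = True"

definition dhom :: "nat \<Rightarrow> nat \<Rightarrow> nat \<Rightarrow> dterm \<Rightarrow> bool" where
  "dhom n k l t \<longleftrightarrow> dwt n t \<and> ddom n t = k \<and> dcod n t = l"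

text \<open>Formal k-linear combinations of terms (finitely supported coefficient functions).\<close>

definition is_dlc :: "nat \<Rightarrow> nat \<Rightarrow> nat \<Rightarrow> (dterm \<Rightarrow> 'k::field) \<Rightarrow> bool" where
  "is_dlc n k l x \<longleftrightarrow> finite {t. x t \<noteq> 0} \<and> (\<forall>t. x t \<noteq> 0 \<longrightarrow> dhom n k l t)"

definition single :: "dterm \<Rightarrow> dterm \<Rightarrow> 'k::field" where
  "single t = (\<lambda>s. if s = t then 1 else 0)"

definition ldiff :: "dterm \<Rightarrow> dterm \<Rightarrow> dterm \<Rightarrow> 'k::field" where
  "ldiff t u = (\<lambda>s. single t s - single u s)"

definition lcomp :: "dterm \<Rightarrow> (dterm \<Rightarrow> 'k::field) \<Rightarrow> dterm \<Rightarrow> 'k" where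
  "lcomp t x = (\<lambda>s. case s of DComp a b \<Rightarrow> (if a = t then x b else 0) | _ \<Rightarrow> 0)"

definition rcomp :: "dterm \<Rightarrow> (dterm \<Rightarrow> 'k::field) \<Rightarrow> dterm \<Rightarrow> 'k" where
  "rcomp t x = (\<lambda>s. case s of DComp a b \<Rightarrow> (if b = t then x a else 0) | _ \<Rightarrow> 0)"

definition ltens :: "dterm \<Rightarrow> (dterm \<Rightarrow> 'k::field) \<Rightarrow> dterm \<Rightarrow> 'k" where
  "ltens t x = (\<lambda>s. case s of DTens a b \<Rightarrow> (if a = t then x b else 0) | _ \<Rightarrow> 0)"

definition rtens :: "dterm \<Rightarrow> (dterm \<Rightarrow> 'k::field) \<Rightarrow> dterm \<Rightarrow> 'k" where
  "rtens t x = (\<lambda>s. case s of DTens a b \<Rightarrow> (if b = t then x a else 0) | _ \<Rightarrow> 0)"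

text \<open>The tensor ideal of null linear combinations: it is generated by the axioms of a
  strict monoidal category (so that terms modulo it give the free strict k-linear monoidal
  category on id_1, f_n, g_n) together with the three defining relations of D_{zeta,n}.
  dnull z n k l x means: x is zero in Hom_D(k,l).\<close>

inductive dnull :: "'k::field \<Rightarrow> nat \<Rightarrow> nat \<Rightarrow> nat \<Rightarrow> (dterm \<Rightarrow> 'k) \<Rightarrow> bool"
  for z :: "'k" and n :: nat where
  zero: "dnull z n k l (\<lambda>_. 0)"
| add: "dnull z n k l x \<Longrightarrow> dnull z n k l y \<Longrightarrow> dnull z n k l (\<lambda>s. x s + y s)"
| smult: "dnull z n k l x \<Longrightarrow> dnull z n k l (\<lambda>s. c * x s)"
| assoc: "dhom n j l a \<Longrightarrow> dhom n i j b \<Longrightarrow> dhom n h i c \<Longrightarrow>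
          dnull z n h l (ldiff (DComp (DComp a b) c) (DComp a (DComp b c)))"
| idl: "dhom n k l a \<Longrightarrow> dnull z n k l (ldiff (DComp (DId l) a) a)"
| idr: "dhom n k l a \<Longrightarrow> dnull z n k l (ldiff (DComp a (DId k)) a)"
| tassoc: "dhom n k1 l1 a \<Longrightarrow> dhom n k2 l2 b \<Longrightarrow> dhom n k3 l3 c \<Longrightarrow>
          dnull z n (k1 + k2 + k3) (l1 + l2 + l3)
            (ldiff (DTens (DTens a b) c) (DTens a (DTens b c)))"
| tunitl: "dhom n k l a \<Longrightarrow> dnull z n k l (ldiff (DTens (DId 0) a) a)"
| tunitr: "dhom n k l a \<Longrightarrow> dnull z n k l (ldiff (DTens a (DId 0)) a)"
| interchange: "dhom n j l a \<Longrightarrow> dhom n i j b \<Longrightarrow> dhom n j' l' c \<Longrightarrow> dhom n i' j' d \<Longrightarrow>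
          dnull z n (i + i') (l + l')
            (ldiff (DTens (DComp a b) (DComp c d)) (DComp (DTens a c) (DTens b d)))"
| idtens: "dnull z n (k + l) (k + l) (ldiff (DTens (DId k) (DId l)) (DId (k + l)))"
| rel_fg: "dnull z n 0 0 (ldiff (DComp Df Dg) (DId 0))"
| rel_gf: "dnull z n n n (ldiff (DComp Dg Df) (DId n))"
| rel_twist: "dnull z n (1 + n) 1
            (\<lambda>s. single (DTens (DId 1) Df) s - z * single (DTens Df (DId 1)) s)"
| compL: "dhom n l m t \<Longrightarrow> dnull z n k l x \<Longrightarrow> dnull z n k m (lcomp t x)"
| compR: "dhom n j k t \<Longrightarrow> dnull z n k l x \<Longrightarrow> dnull z n j l (rcomp t x)"
| tensL: "dhom n k' l' t \<Longrightarrow> dnull z n k l x \<Longrightarrow> dnull z n (k' + k) (l' + l) (ltens t x)"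
| tensR: "dhom n k' l' t \<Longrightarrow> dnull z n k l x \<Longrightarrow> dnull z n (k + k') (l + l') (rtens t x)"

text \<open>delta_a tensor delta_b = delta_{(a+b) mod n}; Hom(delta_a, delta_b) is k (scalars)
  if a = b and 0 otherwise; composition and tensor of morphisms are products of scalars.
  The associator on (delta_a tensor delta_b) tensor delta_c is the scalar below.\<close>

definition vassoc :: "'k::field \<Rightarrow> nat \<Rightarrow> nat \<Rightarrow> nat \<Rightarrow> nat \<Rightarrow> 'k" where
  "vassoc z n a b c = z ^ (a * (b + c - (b + c) mod n) div n)"

text \<open>Monoidal structure of F: J k l : F(k) tensor F(l) = delta_1^{k} tensor delta_1^{l}
  \<rightarrow> delta_1^{k+l}, where delta_1^{m} denotes the left-nested tensor power
  (delta_1^{0} = 1, delta_1^{m+1} = delta_1^{m} tensor delta_1), built from associators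
  (unit isomorphisms are identities).\<close>

fun Jmon :: "'k::field \<Rightarrow> nat \<Rightarrow> nat \<Rightarrow> nat \<Rightarrow> 'k" where
  "Jmon z n k 0 = 1"
| "Jmon z n k (Suc l) = Jmon z n k l * inverse (vassoc z n (k mod n) (l mod n) 1)"

text \<open>The functor F on terms: F(id) = identity, F(f_n) = lambda, F(g_n) = lambda^{-1}
  (lambda = canonical iso, the scalar 1), F preserves composition, and
  F(a tensor b) o J = J o (F a tensor F b).\<close>

fun Fterm :: "'k::field \<Rightarrow> nat \<Rightarrow> dterm \<Rightarrow> 'k" where
  "Fterm z n (DId k) = 1"
| "Fterm z n Df = 1"
| "Fterm z n Dg = 1"
| "Fterm z n (DComp a b) = Fterm z n a * Fterm z n b"
| "Fterm z n (DTens a b) =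
     Jmon z n (dcod n a) (dcod n b) * Fterm z n a * Fterm z n b
       * inverse (Jmon z n (ddom n a) (ddom n b))"

text \<open>F on Hom_D(k,l), valued in Hom(delta_{k mod n}, delta_{l mod n}) (scalars, which must be
  0 when k mod n \<noteq> l mod n).\<close>

definition Fhom :: "'k::field \<Rightarrow> nat \<Rightarrow> nat \<Rightarrow> nat \<Rightarrow> (dterm \<Rightarrow> 'k) \<Rightarrow> 'k" where
  "Fhom z n k l x =
     (if k mod n = l mod n then (\<Sum>t\<in>{t. x t \<noteq> 0}. x t * Fterm z n t) else 0)"

end

theory Submission
  imports Defs
begin
lemma dnull_eq: "dnull z n k l x \<Longrightarrow> x = y \<Longrightarrow> dnull z n k l y" by simp

lemma rcomp_single: "rcomp b (\<lambda>u. single a u - c * single a' u) = (\<lambda>u. single (DComp a b) u - c * single (DComp a' b) u)"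
  by (rule ext, case_tac u) (auto simp: rcomp_def single_def)
lemma lcomp_single: "lcomp a (\<lambda>u. single b u - c * single b' u) = (\<lambda>u. single (DComp a b) u - c * single (DComp a b') u)"
  by (rule ext, case_tac u) (auto simp: lcomp_def single_def)
lemma rtens_single: "rtens b (\<lambda>u. single a u - c * single a' u) = (\<lambda>u. single (DTens a b) u - c * single (DTens a' b) u)"
  by (rule ext, case_tac u) (auto simp: rtens_def single_def)
lemma ltens_single: "ltens a (\<lambda>u. single b u - c * single b' u) = (\<lambda>u. single (DTens a b) u - c * single (DTens a b') u)"
  by (rule ext, case_tac u) (auto simp: ltens_def single_def)

locale ctx =
  fixes z :: "'k::field" and n :: nat
  assumes n1: "n \<ge> 1" and zn: "z ^ n = 1"
begin

lemma z_nz: "z \<noteq> 0" using n1 zn by (metis not_one_le_zero power_0_left zero_neq_one le_zero_eq power_eq_0_iff)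

definition Req :: "dterm \<Rightarrow> dterm \<Rightarrow> 'k \<Rightarrow> bool" where
  "Req t s c \<longleftrightarrow> dwt n t \<and> dwt n s \<and> ddom n s = ddom n t \<and> dcod n s = dcod n t \<and>
     dnull z n (ddom n t) (dcod n t) (\<lambda>u. single t u - c * single s u)"

definition Eq :: "dterm \<Rightarrow> dterm \<Rightarrow> bool" where
  "Eq t s \<longleftrightarrow> (\<exists>c. c \<noteq> 0 \<and> Req t s c)"

lemma Req_refl: "dwt n t \<Longrightarrow> Req t t 1"
  unfolding Req_def by (auto intro: dnull_eq[OF dnull.zero])

lemma Req_sym: assumes "Req t s c" "c \<noteq> 0" shows "Req s t (inverse c)"
proof -
  have h: "dnull z n (ddom n t) (dcod n t) (\<lambda>u. single t u - c * single s u)" using assms unfolding Req_def by auto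
  have "dnull z n (ddom n t) (dcod n t) (\<lambda>u. (- inverse c) * (single t u - c * single s u))"
    by (rule dnull.smult[OF h])
  then have "dnull z n (ddom n t) (dcod n t) (\<lambda>u. single s u - inverse c * single t u)"
    by (rule dnull_eq) (rule ext, simp add: algebra_simps assms(2))
  then show ?thesis using assms unfolding Req_def by auto
qed

lemma Req_trans: assumes "Req t s c" "Req s u d" shows "Req t u (c * d)"
proof -
  have h1: "dnull z n (ddom n t) (dcod n t) (\<lambda>v. single t v - c * single s v)" using assms unfolding Req_def by auto
  have h2: "dnull z n (ddom n t) (dcod n t) (\<lambda>v. single s v - d * single u v)" using assms unfolding Req_def by auto
  have "dnull z n (ddom n t) (dcod n t) (\<lambda>v. (single t v - c * single s v) + c * (single s v - d * single u v))"
    by (rule dnull.add[OF h1 dnull.smult[OF h2]])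
  then have "dnull z n (ddom n t) (dcod n t) (\<lambda>v. single t v - (c*d) * single u v)"
    by (rule dnull_eq) (rule ext, simp add: algebra_simps)
  then show ?thesis using assms unfolding Req_def by auto
qed

lemma Req_comp: assumes "Req a a' c" "Req b b' d" "ddom n a = dcod n b"
  shows "Req (DComp a b) (DComp a' b') (c * d)"
proof -
  have h1: "dnull z n (ddom n a) (dcod n a) (\<lambda>v. single a v - c * single a' v)" using assms unfolding Req_def by auto
  have h2: "dnull z n (ddom n b) (dcod n b) (\<lambda>v. single b v - d * single b' v)" using assms unfolding Req_def by auto
  have "dnull z n (ddom n b) (dcod n a) (rcomp b (\<lambda>v. single a v - c * single a' v))"
    by (rule dnull.compR[OF _ h1]) (use assms in \<open>auto simp: dhom_def Req_def\<close>)
  then have r1: "Req (DComp a b) (DComp a' b) c" using assms by (auto simp: Req_def rcomp_single)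
  have "dnull z n (ddom n b) (dcod n a') (lcomp a' (\<lambda>v. single b v - d * single b' v))"
    by (rule dnull.compL[OF _ h2]) (use assms in \<open>auto simp: dhom_def Req_def\<close>)
  then have r2: "Req (DComp a' b) (DComp a' b') d" using assms by (auto simp: Req_def lcomp_single)
  show ?thesis by (rule Req_trans[OF r1 r2])
qed

lemma Req_tens: assumes "Req a a' c" "Req b b' d"
  shows "Req (DTens a b) (DTens a' b') (c * d)"
proof -
  have h1: "dnull z n (ddom n a) (dcod n a) (\<lambda>v. single a v - c * single a' v)" using assms unfolding Req_def by auto
  have h2: "dnull z n (ddom n b) (dcod n b) (\<lambda>v. single b v - d * single b' v)" using assms unfolding Req_def by auto
  have "dnull z n (ddom n a + ddom n b) (dcod n a + dcod n b) (rtens b (\<lambda>v. single a v - c * single a' v))"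
    by (rule dnull.tensR[OF _ h1]) (use assms in \<open>auto simp: dhom_def Req_def\<close>)
  then have r1: "Req (DTens a b) (DTens a' b) c" using assms by (auto simp: Req_def rtens_single)
  have "dnull z n (ddom n a' + ddom n b) (dcod n a' + dcod n b) (ltens a' (\<lambda>v. single b v - d * single b' v))"
    by (rule dnull.tensL[OF _ h2]) (use assms in \<open>auto simp: dhom_def Req_def\<close>)
  then have r2: "Req (DTens a' b) (DTens a' b') d" using assms by (auto simp: Req_def ltens_single)
  show ?thesis by (rule Req_trans[OF r1 r2])
qed

lemma Req_ldiff: "dwt n t \<Longrightarrow> dwt n s \<Longrightarrow> ddom n s = ddom n t \<Longrightarrow> dcod n s = dcod n t \<Longrightarrow>
   dnull z n (ddom n t) (dcod n t) (ldiff t s) \<Longrightarrow> Req t s 1"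
  unfolding Req_def ldiff_def by auto

lemma Eq_refl: "dwt n t \<Longrightarrow> Eq t t"
  unfolding Eq_def by (rule exI[of _ 1]) (simp add: Req_refl)
lemma Eq_sym: "Eq t s \<Longrightarrow> Eq s t"
proof -
  assume "Eq t s"
  then obtain c where "c \<noteq> 0" "Req t s c" unfolding Eq_def by blast
  then have "Req s t (inverse c)" "inverse c \<noteq> 0" using Req_sym by simp_all
  then show "Eq s t" unfolding Eq_def by blast
qed
lemma Eq_trans[trans]: "Eq t s \<Longrightarrow> Eq s u \<Longrightarrow> Eq t u"
proof -
  assume "Eq t s" "Eq s u"
  then obtain c d where "c \<noteq> 0" "Req t s c" "d \<noteq> 0" "Req s u d" unfolding Eq_def by blast
  then have "Req t u (c * d)" "c * d \<noteq> 0" using Req_trans by simp_all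
  then show "Eq t u" unfolding Eq_def by blast
qed
lemma Eq_comp: "Eq a a' \<Longrightarrow> Eq b b' \<Longrightarrow> ddom n a = dcod n b \<Longrightarrow> Eq (DComp a b) (DComp a' b')"
proof -
  assume "Eq a a'" "Eq b b'" "ddom n a = dcod n b"
  then obtain c d where "c \<noteq> 0" "Req a a' c" "d \<noteq> 0" "Req b b' d" unfolding Eq_def by blast
  then have "Req (DComp a b) (DComp a' b') (c * d)" "c * d \<noteq> 0" using Req_comp \<open>ddom n a = dcod n b\<close> by simp_all
  then show ?thesis unfolding Eq_def by blast
qed
lemma Eq_tens: "Eq a a' \<Longrightarrow> Eq b b' \<Longrightarrow> Eq (DTens a b) (DTens a' b')"
proof -
  assume "Eq a a'" "Eq b b'"
  then obtain c d where "c \<noteq> 0" "Req a a' c" "d \<noteq> 0" "Req b b' d" unfolding Eq_def by blast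
  then have "Req (DTens a b) (DTens a' b') (c * d)" "c * d \<noteq> 0" using Req_tens by simp_all
  then show ?thesis unfolding Eq_def by blast
qed
lemma Eq_ldiff: "dwt n t \<Longrightarrow> dwt n s \<Longrightarrow> ddom n s = ddom n t \<Longrightarrow> dcod n s = dcod n t \<Longrightarrow>
   dnull z n (ddom n t) (dcod n t) (ldiff t s) \<Longrightarrow> Eq t s"
  unfolding Eq_def by (rule exI[of _ 1]) (simp add: Req_ldiff)
lemma Eq_wt: "Eq t s \<Longrightarrow> dwt n t \<and> dwt n s \<and> ddom n s = ddom n t \<and> dcod n s = dcod n t"
  unfolding Eq_def Req_def by auto

lemma E_assoc: "dwt n a \<Longrightarrow> dwt n b \<Longrightarrow> dwt n c \<Longrightarrow> ddom n a = dcod n b \<Longrightarrow> ddom n b = dcod n c \<Longrightarrow>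
  Eq (DComp (DComp a b) c) (DComp a (DComp b c))"
  by (rule Eq_ldiff) (auto intro!: dnull.assoc simp: dhom_def)
lemma E_idl: "dwt n a \<Longrightarrow> dcod n a = l \<Longrightarrow> Eq (DComp (DId l) a) a"
  by (rule Eq_ldiff) (auto intro!: dnull.idl simp: dhom_def)
lemma E_idr: "dwt n a \<Longrightarrow> ddom n a = l \<Longrightarrow> Eq (DComp a (DId l)) a"
  by (rule Eq_ldiff) (auto intro!: dnull.idr simp: dhom_def)
lemma E_tassoc: "dwt n a \<Longrightarrow> dwt n b \<Longrightarrow> dwt n c \<Longrightarrow> Eq (DTens (DTens a b) c) (DTens a (DTens b c))"
  by (rule Eq_ldiff) (auto intro!: dnull.tassoc simp: dhom_def)
lemma E_tunitl: "dwt n a \<Longrightarrow> Eq (DTens (DId 0) a) a"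
  by (rule Eq_ldiff) (auto intro!: dnull.tunitl simp: dhom_def)
lemma E_tunitr: "dwt n a \<Longrightarrow> Eq (DTens a (DId 0)) a"
  by (rule Eq_ldiff) (auto intro!: dnull.tunitr simp: dhom_def)
lemma E_inter: "dwt n a \<Longrightarrow> dwt n b \<Longrightarrow> dwt n c \<Longrightarrow> dwt n d \<Longrightarrow> ddom n a = dcod n b \<Longrightarrow> ddom n c = dcod n d \<Longrightarrow>
  Eq (DTens (DComp a b) (DComp c d)) (DComp (DTens a c) (DTens b d))"
  by (rule Eq_ldiff) (auto intro!: dnull.interchange simp: dhom_def)
lemma E_idtens: "Eq (DTens (DId k) (DId l)) (DId (k + l))"
  by (rule Eq_ldiff) (auto intro!: dnull.idtens)
lemma E_fg: "Eq (DComp Df Dg) (DId 0)"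
  by (rule Eq_ldiff) (auto intro!: dnull.rel_fg)
lemma E_gf: "Eq (DComp Dg Df) (DId n)"
  by (rule Eq_ldiff) (auto intro!: dnull.rel_gf)
lemma E_twist: "Eq (DTens (DId 1) Df) (DTens Df (DId 1))"
  unfolding Eq_def Req_def using z_nz dnull.rel_twist[of z n] by auto

end

fun Fp :: "nat \<Rightarrow> dterm" where
  "Fp 0 = DId 0" | "Fp (Suc p) = DTens Df (Fp p)"
fun Gp :: "nat \<Rightarrow> dterm" where
  "Gp 0 = DId 0" | "Gp (Suc p) = DTens Dg (Gp p)"

lemma Fp_wt[simp]: "dwt n (Fp p)" "ddom n (Fp p) = p * n" "dcod n (Fp p) = 0"
  by (induction p) auto
lemma Gp_wt[simp]: "dwt n (Gp p)" "ddom n (Gp p) = 0" "dcod n (Gp p) = p * n"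
  by (induction p) auto

context ctx begin

definition e :: "nat \<Rightarrow> dterm" where "e k = DTens (DId (k mod n)) (Fp (k div n))"
definition ei :: "nat \<Rightarrow> dterm" where "ei k = DTens (DId (k mod n)) (Gp (k div n))"
definition Nf :: "nat \<Rightarrow> nat \<Rightarrow> dterm" where "Nf k l = DComp (ei l) (e k)"

lemma e_wt[simp]: "dwt n (e k)" "ddom n (e k) = k" "dcod n (e k) = k mod n"
  "dwt n (ei k)" "ddom n (ei k) = k mod n" "dcod n (ei k) = k"
  by (auto simp: e_def ei_def)

lemma L1: "Eq (DTens Df (DId a)) (DTens (DId a) Df)"
proof (induction a)
  case 0
  have "Eq (DTens Df (DId 0)) Df" by (rule E_tunitr) simp
  also have "Eq Df (DTens (DId 0) Df)" by (rule Eq_sym, rule E_tunitl) simp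
  finally show ?case .
next
  case (Suc a)
  have "Eq (DTens Df (DId (Suc a))) (DTens Df (DTens (DId a) (DId 1)))"
    by (rule Eq_tens, rule Eq_refl, simp, rule Eq_sym) (use E_idtens[of a 1] in simp)
  also have "Eq \<dots> (DTens (DTens Df (DId a)) (DId 1))" by (rule Eq_sym, rule E_tassoc) simp_all
  also have "Eq \<dots> (DTens (DTens (DId a) Df) (DId 1))" by (rule Eq_tens[OF Suc Eq_refl]) simp
  also have "Eq \<dots> (DTens (DId a) (DTens Df (DId 1)))" by (rule E_tassoc) simp_all
  also have "Eq \<dots> (DTens (DId a) (DTens (DId 1) Df))" by (rule Eq_tens[OF Eq_refl Eq_sym[OF E_twist]]) simp
  also have "Eq \<dots> (DTens (DTens (DId a) (DId 1)) Df)" by (rule Eq_sym, rule E_tassoc) simp_all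
  also have "Eq \<dots> (DTens (DId (Suc a)) Df)" by (rule Eq_tens[OF _ Eq_refl]) (use E_idtens[of a 1] in simp_all)
  finally show ?case .
qed

lemma L2: "Eq (DTens (Fp p) (DId a)) (DTens (DId a) (Fp p))"
proof (induction p)
  case 0
  have "Eq (DTens (DId 0) (DId a)) (DId a)" by (rule E_tunitl) simp
  also have "Eq (DId a) (DTens (DId a) (DId 0))" by (rule Eq_sym, rule E_tunitr) simp
  finally show ?case by simp
next
  case (Suc p)
  have "Eq (DTens (DTens Df (Fp p)) (DId a)) (DTens Df (DTens (Fp p) (DId a)))" by (rule E_tassoc) simp_all
  also have "Eq \<dots> (DTens Df (DTens (DId a) (Fp p)))" by (rule Eq_tens[OF Eq_refl Suc]) simp
  also have "Eq \<dots> (DTens (DTens Df (DId a)) (Fp p))" by (rule Eq_sym, rule E_tassoc) simp_all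
  also have "Eq \<dots> (DTens (DTens (DId a) Df) (Fp p))" by (rule Eq_tens[OF L1 Eq_refl]) simp
  also have "Eq \<dots> (DTens (DId a) (DTens Df (Fp p)))" by (rule E_tassoc) simp_all
  finally show ?case by simp
qed

lemma L3: "Eq (DTens (Fp p) (Fp m)) (Fp (p + m))"
proof (induction p)
  case 0
  show ?case by simp (rule E_tunitl, simp)
next
  case (Suc p)
  have "Eq (DTens (DTens Df (Fp p)) (Fp m)) (DTens Df (DTens (Fp p) (Fp m)))" by (rule E_tassoc) simp_all
  also have "Eq \<dots> (DTens Df (Fp (p + m)))" by (rule Eq_tens[OF Eq_refl Suc]) simp
  finally show ?case by simp
qed

lemma L4: "Eq (DComp (Fp p) (Gp p)) (DId 0)"
proof (induction p)
  case 0
  show ?case by simp (rule E_idl, simp_all)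
next
  case (Suc p)
  have "Eq (DComp (DTens Df (Fp p)) (DTens Dg (Gp p))) (DTens (DComp Df Dg) (DComp (Fp p) (Gp p)))"
    by (rule Eq_sym, rule E_inter) simp_all
  also have "Eq \<dots> (DTens (DId 0) (DId 0))" by (rule Eq_tens[OF E_fg Suc])
  also have "Eq \<dots> (DId 0)" by (rule E_tunitl) simp
  finally show ?case by simp
qed

lemma L5: "Eq (DComp (Gp p) (Fp p)) (DId (p * n))"
proof (induction p)
  case 0
  show ?case by simp (rule E_idl, simp_all)
next
  case (Suc p)
  have "Eq (DComp (DTens Dg (Gp p)) (DTens Df (Fp p))) (DTens (DComp Dg Df) (DComp (Gp p) (Fp p)))"
    by (rule Eq_sym, rule E_inter) simp_all
  also have "Eq \<dots> (DTens (DId n) (DId (p * n)))" by (rule Eq_tens[OF E_gf Suc])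
  also have "Eq \<dots> (DId (n + p * n))" by (rule E_idtens)
  finally show ?case by simp
qed

lemma L6: "Eq (DComp (e k) (ei k)) (DId (k mod n))"
proof -
  have "Eq (DComp (e k) (ei k)) (DTens (DComp (DId (k mod n)) (DId (k mod n))) (DComp (Fp (k div n)) (Gp (k div n))))"
    unfolding e_def ei_def by (rule Eq_sym, rule E_inter) simp_all
  also have "Eq \<dots> (DTens (DId (k mod n)) (DId 0))" by (rule Eq_tens[OF E_idl L4]) simp_all
  also have "Eq \<dots> (DId (k mod n))" by (rule E_tunitr) simp
  finally show ?thesis .
qed

lemma L7: "Eq (DComp (ei k) (e k)) (DId k)"
proof -
  have "Eq (DComp (ei k) (e k)) (DTens (DComp (DId (k mod n)) (DId (k mod n))) (DComp (Gp (k div n)) (Fp (k div n))))"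
    unfolding e_def ei_def by (rule Eq_sym, rule E_inter) simp_all
  also have "Eq \<dots> (DTens (DId (k mod n)) (DId (k div n * n)))" by (rule Eq_tens[OF E_idl L5]) simp_all
  also have "Eq \<dots> (DId (k mod n + k div n * n))" by (rule E_idtens)
  finally show ?thesis by simp
qed

end

context ctx begin

lemma L8: "Eq (DComp (Fp q) (DTens (DId (q * n)) (Fp P))) (Fp (q + P))"
proof -
  have "Eq (DComp (Fp q) (DTens (DId (q * n)) (Fp P))) (DComp (DTens (Fp q) (DId 0)) (DTens (DId (q * n)) (Fp P)))"
    by (rule Eq_comp[OF Eq_sym[OF E_tunitr] Eq_refl]) simp_all
  also have "Eq \<dots> (DTens (DComp (Fp q) (DId (q * n))) (DComp (DId 0) (Fp P)))"
    by (rule Eq_sym, rule E_inter) simp_all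
  also have "Eq \<dots> (DTens (Fp q) (Fp P))" by (rule Eq_tens[OF E_idr E_idl]) simp_all
  also have "Eq \<dots> (Fp (q + P))" by (rule L3)
  finally show ?thesis .
qed

lemma G: "Eq (DComp (e m) (DTens (DId m) (Fp P))) (e (m + P * n))"
proof -
  let ?r = "m mod n" and ?q = "m div n"
  have dm: "Eq (DId m) (DTens (DId ?r) (DId (?q * n)))"
    using Eq_sym[OF E_idtens[of ?r "?q * n"]] by simp
  have "Eq (DComp (e m) (DTens (DId m) (Fp P))) (DComp (e m) (DTens (DTens (DId ?r) (DId (?q * n))) (Fp P)))"
    by (rule Eq_comp[OF Eq_refl Eq_tens[OF dm Eq_refl]]) simp_all
  also have "Eq \<dots> (DComp (e m) (DTens (DId ?r) (DTens (DId (?q * n)) (Fp P))))"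
    by (rule Eq_comp[OF Eq_refl E_tassoc]) simp_all
  also have "Eq \<dots> (DTens (DComp (DId ?r) (DId ?r)) (DComp (Fp ?q) (DTens (DId (?q * n)) (Fp P))))"
    unfolding e_def by (rule Eq_sym, rule E_inter) simp_all
  also have "Eq \<dots> (DTens (DId ?r) (Fp (?q + P)))" by (rule Eq_tens[OF E_idl L8]) simp_all
  also have "DTens (DId ?r) (Fp (?q + P)) = e (m + P * n)"
    unfolding e_def using n1 by (simp add: add.commute)
  finally show ?thesis .
qed

lemma K: "Eq (DComp (e (k mod n + k' mod n)) (DTens (e k) (e k'))) (e (k + k'))"
proof -
  let ?r = "k mod n" and ?r' = "k' mod n" and ?p = "k div n" and ?p' = "k' div n"
  have "Eq (DTens (e k) (e k')) (DTens (DId ?r) (DTens (Fp ?p) (DTens (DId ?r') (Fp ?p'))))"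
    unfolding e_def by (rule E_tassoc) simp_all
  also have "Eq \<dots> (DTens (DId ?r) (DTens (DTens (Fp ?p) (DId ?r')) (Fp ?p')))"
    by (rule Eq_tens[OF Eq_refl Eq_sym[OF E_tassoc]]) simp_all
  also have "Eq \<dots> (DTens (DId ?r) (DTens (DTens (DId ?r') (Fp ?p)) (Fp ?p')))"
    by (rule Eq_tens[OF Eq_refl Eq_tens[OF L2 Eq_refl]]) simp_all
  also have "Eq \<dots> (DTens (DId ?r) (DTens (DId ?r') (DTens (Fp ?p) (Fp ?p'))))"
    by (rule Eq_tens[OF Eq_refl E_tassoc]) simp_all
  also have "Eq \<dots> (DTens (DTens (DId ?r) (DId ?r')) (DTens (Fp ?p) (Fp ?p')))"
    by (rule Eq_sym, rule E_tassoc) simp_all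
  also have "Eq \<dots> (DTens (DId (?r + ?r')) (Fp (?p + ?p')))"
    by (rule Eq_tens[OF E_idtens L3])
  finally have h: "Eq (DTens (e k) (e k')) (DTens (DId (?r + ?r')) (Fp (?p + ?p')))" .
  have "Eq (DComp (e (?r + ?r')) (DTens (e k) (e k'))) (DComp (e (?r + ?r')) (DTens (DId (?r + ?r')) (Fp (?p + ?p'))))"
    by (rule Eq_comp[OF Eq_refl h]) simp_all
  also have "Eq \<dots> (e (?r + ?r' + (?p + ?p') * n))" by (rule G)
  also have "?r + ?r' + (?p + ?p') * n = k + k'"
    by (simp add: algebra_simps)
  finally show ?thesis .
qed

lemma Kinv: "Eq (DTens (ei l) (ei l')) (DComp (ei (l + l')) (e (l mod n + l' mod n)))"
proof -
  let ?s = "l mod n" and ?s' = "l' mod n"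
  let ?X = "DTens (ei l) (ei l')"
  have "Eq ?X (DComp (DId (l + l')) ?X)" by (rule Eq_sym, rule E_idl) (simp_all add: mod_add_eq)
  also have "Eq \<dots> (DComp (DComp (ei (l + l')) (e (l + l'))) ?X)"
    by (rule Eq_comp[OF Eq_sym[OF L7] Eq_refl]) (simp_all add: mod_add_eq)
  also have "Eq \<dots> (DComp (ei (l + l')) (DComp (e (l + l')) ?X))"
    by (rule E_assoc) (simp_all add: mod_add_eq)
  also have "Eq \<dots> (DComp (ei (l + l')) (DComp (DComp (e (?s + ?s')) (DTens (e l) (e l'))) ?X))"
    by (rule Eq_comp[OF Eq_refl Eq_comp[OF Eq_sym[OF K] Eq_refl]]) (simp_all add: mod_add_eq)
  also have "Eq \<dots> (DComp (ei (l + l')) (DComp (e (?s + ?s')) (DComp (DTens (e l) (e l')) ?X)))"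
    by (rule Eq_comp[OF Eq_refl E_assoc]) (simp_all add: mod_add_eq)
  also have "Eq \<dots> (DComp (ei (l + l')) (DComp (e (?s + ?s')) (DTens (DComp (e l) (ei l)) (DComp (e l') (ei l')))))"
    by (rule Eq_comp[OF Eq_refl Eq_comp[OF Eq_refl Eq_sym[OF E_inter]]]) (simp_all add: mod_add_eq)
  also have "Eq \<dots> (DComp (ei (l + l')) (DComp (e (?s + ?s')) (DTens (DId ?s) (DId ?s'))))"
    by (rule Eq_comp[OF Eq_refl Eq_comp[OF Eq_refl Eq_tens[OF L6 L6]]]) (simp_all add: mod_add_eq)
  also have "Eq \<dots> (DComp (ei (l + l')) (DComp (e (?s + ?s')) (DId (?s + ?s'))))"
    by (rule Eq_comp[OF Eq_refl Eq_comp[OF Eq_refl E_idtens]]) (simp_all add: mod_add_eq)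
  also have "Eq \<dots> (DComp (ei (l + l')) (e (?s + ?s')))"
    by (rule Eq_comp[OF Eq_refl E_idr]) (simp_all add: mod_add_eq)
  finally show ?thesis .
qed

lemma span: "dwt n t \<Longrightarrow> ddom n t mod n = dcod n t mod n \<and> Eq t (Nf (ddom n t) (dcod n t))"
proof (induction t)
  case (DId k)
  then show ?case unfolding Nf_def using Eq_sym[OF L7] by simp
next
  case Df
  have nn: "n mod n = 0" "n div n = 1" using n1 by auto
  have "Eq Df (DComp (DId 0) Df)" by (rule Eq_sym, rule E_idl) simp_all
  also have "Eq \<dots> (DComp (DTens (DId 0) (DId 0)) (DTens (DId 0) (DTens Df (DId 0))))"
  proof (rule Eq_comp)
    show "Eq (DId 0) (DTens (DId 0) (DId 0))" by (rule Eq_sym, rule E_tunitl) simp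
    have "Eq Df (DTens Df (DId 0))" by (rule Eq_sym, rule E_tunitr) simp
    also have "Eq \<dots> (DTens (DId 0) (DTens Df (DId 0)))" by (rule Eq_sym, rule E_tunitl) simp
    finally show "Eq Df (DTens (DId 0) (DTens Df (DId 0)))" .
  qed simp
  also have "DComp (DTens (DId 0) (DId 0)) (DTens (DId 0) (DTens Df (DId 0))) = Nf n 0"
    unfolding Nf_def e_def ei_def by (simp add: nn)
  finally show ?case using nn by simp
next
  case Dg
  have nn: "n mod n = 0" "n div n = 1" using n1 by auto
  have "Eq Dg (DComp Dg (DId 0))" by (rule Eq_sym, rule E_idr) simp_all
  also have "Eq \<dots> (DComp (DTens (DId 0) (DTens Dg (DId 0))) (DTens (DId 0) (DId 0)))"
  proof (rule Eq_comp)
    show "Eq (DId 0) (DTens (DId 0) (DId 0))" by (rule Eq_sym, rule E_tunitl) simp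
    have "Eq Dg (DTens Dg (DId 0))" by (rule Eq_sym, rule E_tunitr) simp
    also have "Eq \<dots> (DTens (DId 0) (DTens Dg (DId 0)))" by (rule Eq_sym, rule E_tunitl) simp
    finally show "Eq Dg (DTens (DId 0) (DTens Dg (DId 0)))" .
  qed simp
  also have "DComp (DTens (DId 0) (DTens Dg (DId 0))) (DTens (DId 0) (DId 0)) = Nf 0 n"
    unfolding Nf_def e_def ei_def by (simp add: nn)
  finally show ?case using nn by simp
next
  case (DComp a b)
  let ?k = "ddom n b" and ?j = "dcod n b" and ?l = "dcod n a"
  from DComp.prems have wa: "dwt n a" and wb: "dwt n b" and ab: "ddom n a = ?j" by auto
  from DComp.IH(1)[OF wa] ab have ma: "?j mod n = ?l mod n" and Ea: "Eq a (Nf ?j ?l)" by auto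
  from DComp.IH(2)[OF wb] have mb: "?k mod n = ?j mod n" and Eb: "Eq b (Nf ?k ?j)" by auto
  have "Eq (DComp a b) (DComp (Nf ?j ?l) (Nf ?k ?j))" by (rule Eq_comp[OF Ea Eb ab])
  also have "Eq \<dots> (DComp (ei ?l) (DComp (e ?j) (DComp (ei ?j) (e ?k))))"
    unfolding Nf_def by (rule E_assoc) (simp_all add: mb ma)
  also have "Eq \<dots> (DComp (ei ?l) (DComp (DComp (e ?j) (ei ?j)) (e ?k)))"
    by (rule Eq_comp[OF Eq_refl Eq_sym[OF E_assoc]]) (simp_all add: mb ma)
  also have "Eq \<dots> (DComp (ei ?l) (DComp (DId (?j mod n)) (e ?k)))"
    by (rule Eq_comp[OF Eq_refl Eq_comp[OF L6 Eq_refl]]) (simp_all add: mb ma)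
  also have "Eq \<dots> (DComp (ei ?l) (e ?k))"
    by (rule Eq_comp[OF Eq_refl E_idl]) (simp_all add: mb ma)
  finally show ?case using ma mb unfolding Nf_def by simp
next
  case (DTens a b)
  let ?k = "ddom n a" and ?l = "dcod n a" and ?k' = "ddom n b" and ?l' = "dcod n b"
  from DTens.prems have wa: "dwt n a" and wb: "dwt n b" by auto
  from DTens.IH(1)[OF wa] have ma: "?k mod n = ?l mod n" and Ea: "Eq a (Nf ?k ?l)" by auto
  from DTens.IH(2)[OF wb] have mb: "?k' mod n = ?l' mod n" and Eb: "Eq b (Nf ?k' ?l')" by auto
  have mab: "(?k + ?k') mod n = (?l + ?l') mod n" using ma mb by (metis mod_add_cong)
  have "Eq (DTens a b) (DTens (Nf ?k ?l) (Nf ?k' ?l'))" by (rule Eq_tens[OF Ea Eb])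
  also have "Eq \<dots> (DComp (DTens (ei ?l) (ei ?l')) (DTens (e ?k) (e ?k')))"
    unfolding Nf_def by (rule E_inter) (simp_all add: ma mb mod_add_eq)
  also have "Eq \<dots> (DComp (DComp (ei (?l + ?l')) (e (?l mod n + ?l' mod n))) (DTens (e ?k) (e ?k')))"
    by (rule Eq_comp[OF Kinv Eq_refl]) (simp_all add: ma mb mod_add_eq)
  also have "Eq \<dots> (DComp (ei (?l + ?l')) (DComp (e (?k mod n + ?k' mod n)) (DTens (e ?k) (e ?k'))))"
    using ma mb by (simp only:) (rule E_assoc, simp_all add: mod_add_eq)
  also have "Eq \<dots> (DComp (ei (?l + ?l')) (e (?k + ?k')))"
    by (rule Eq_comp[OF Eq_refl K]) (simp_all add: mab mod_add_eq)
  finally show ?case using mab unfolding Nf_def by simp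
qed

end

context ctx begin

abbreviation w where "w \<equiv> inverse z"

lemma w_nz: "w \<noteq> 0" using z_nz by simp
lemma wn: "w ^ n = 1" using zn by (metis inverse_1 power_inverse)

lemma w_mod: "w ^ m = w ^ (m mod n)"
proof -
  have "w ^ m = w ^ (n * (m div n) + m mod n)" by (simp only: mult_div_mod_eq)
  also have "\<dots> = (w ^ n) ^ (m div n) * w ^ (m mod n)" by (simp only: power_add power_mult)
  finally show ?thesis using wn by simp
qed

lemma w_cong: "m mod n = m' mod n \<Longrightarrow> w ^ m = w ^ m'" using w_mod by metis

lemma vassoc1: "vassoc z n (k mod n) (l mod n) 1 = (if Suc (l mod n) = n then z ^ (k mod n) else 1)"
proof -
  have lt: "l mod n < n" using n1 by simp
  show ?thesis
  proof (cases "Suc (l mod n) = n")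
    case True
    then show ?thesis unfolding vassoc_def using n1 by simp
  next
    case False
    then have "Suc (l mod n) < n" using lt by simp
    then show ?thesis unfolding vassoc_def using False by simp
  qed
qed

lemma Suc_div: "Suc l div n = l div n + (if Suc (l mod n) = n then 1 else 0)"
  by (simp add: div_Suc mod_Suc)

lemma J_eq: "Jmon z n k l = w ^ ((k mod n) * (l div n))"
proof (induction l)
  case 0 then show ?case by simp
next
  case (Suc l)
  have "Jmon z n k (Suc l) = Jmon z n k l * inverse (vassoc z n (k mod n) (l mod n) 1)" by (simp only: Jmon.simps)
  also have "\<dots> = w ^ ((k mod n) * (l div n)) * inverse (if Suc (l mod n) = n then z ^ (k mod n) else 1)"
    by (simp only: Suc.IH vassoc1)
  also have "\<dots> = w ^ ((k mod n) * (Suc l div n))"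
    by (cases "Suc (l mod n) = n") (simp_all add: Suc_div power_add power_inverse distrib_left)
  finally show ?case .
qed

lemma J_nz: "Jmon z n k l \<noteq> 0" using J_eq w_nz by simp

lemma F_nz: "Fterm z n t \<noteq> 0"
  by (induction t) (auto simp: J_nz)

lemma J0[simp]: "Jmon z n 0 l = 1" "Jmon z n k 0 = 1" by (auto simp: J_eq)

lemma JJ:
  assumes "a mod n = a' mod n" "b mod n = b' mod n" "c mod n = c' mod n"
  shows "Jmon z n (a+b) c * Jmon z n a b * Jmon z n a' (b'+c') * Jmon z n b' c' =
         Jmon z n a (b+c) * Jmon z n b c * Jmon z n (a'+b') c' * Jmon z n a' b'"
proof -
  define ra rb rc where "ra = a mod n" and "rb = b mod n" and "rc = c mod n"
  define Qb Qc Qb' Qc' where "Qb = b div n" and "Qc = c div n" and "Qb' = b' div n" and "Qc' = c' div n"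
  define \<gamma> where "\<gamma> = (rb + rc) div n"
  define \<rho> where "\<rho> = (ra + rb) mod n"
  define \<delta> where "\<delta> = (ra + rb) div n"
  have e1: "(b + c) div n = Qb + Qc + \<gamma>" unfolding Qb_def Qc_def \<gamma>_def rb_def rc_def by (rule div_add1_eq)
  have e2: "(b' + c') div n = Qb' + Qc' + \<gamma>"
  proof -
    have "(b' + c') div n = b' div n + c' div n + (b' mod n + c' mod n) div n" by (rule div_add1_eq)
    then show ?thesis unfolding Qb'_def Qc'_def \<gamma>_def rb_def rc_def using assms by simp
  qed
  have e3: "(a + b) mod n = \<rho>" unfolding \<rho>_def ra_def rb_def by (simp add: mod_add_eq)
  have e4: "(a' + b') mod n = \<rho>" using e3 assms by (metis mod_add_cong)
  have e5: "ra + rb = \<rho> + n * \<delta>" unfolding \<rho>_def \<delta>_def by simp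
  define E1 where "E1 = \<rho> * Qc + ra * Qb + ra * (Qb' + Qc' + \<gamma>) + rb * Qc'"
  define E2 where "E2 = ra * (Qb + Qc + \<gamma>) + rb * Qc + \<rho> * Qc' + ra * Qb'"
  have "E1 + n * (\<delta> * Qc) = E2 + n * (\<delta> * Qc')"
  proof -
    have "E1 + n * (\<delta> * Qc) = (\<rho> + n * \<delta>) * Qc + ra * Qb + ra * (Qb' + Qc' + \<gamma>) + rb * Qc'"
      unfolding E1_def by (simp add: algebra_simps)
    also have "\<dots> = (ra + rb) * Qc + ra * Qb + ra * (Qb' + Qc' + \<gamma>) + rb * Qc'" using e5 by simp
    also have "\<dots> = ra * (Qb + Qc + \<gamma>) + rb * Qc + (ra + rb) * Qc' + ra * Qb'" by (simp add: algebra_simps)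
    also have "\<dots> = ra * (Qb + Qc + \<gamma>) + rb * Qc + (\<rho> + n * \<delta>) * Qc' + ra * Qb'" using e5 by simp
    also have "\<dots> = E2 + n * (\<delta> * Qc')" unfolding E2_def by (simp add: algebra_simps)
    finally show ?thesis .
  qed
  then have "(E1 + n * (\<delta> * Qc)) mod n = (E2 + n * (\<delta> * Qc')) mod n" by simp
  then have "E1 mod n = E2 mod n" by simp
  then have wE: "w ^ E1 = w ^ E2" by (rule w_cong)
  have L: "Jmon z n (a+b) c * Jmon z n a b * Jmon z n a' (b'+c') * Jmon z n b' c' = w ^ E1"
    unfolding J_eq E1_def using e2 e3 assms
    by (simp add: power_add ra_def rb_def Qb_def Qc_def Qb'_def Qc'_def)
  have R: "Jmon z n a (b+c) * Jmon z n b c * Jmon z n (a'+b') c' * Jmon z n a' b' = w ^ E2"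
    unfolding J_eq E2_def using e1 e4 assms
    by (simp add: power_add ra_def rb_def Qb_def Qc_def Qb'_def Qc'_def)
  show ?thesis using L R wE by simp
qed

end

lemma dwt_mod: "dwt n t \<Longrightarrow> ddom n t mod n = dcod n t mod n"
  by (induction t) (auto intro: mod_add_cong)

context ctx begin

abbreviation F where "F \<equiv> Fterm z n"

definition Sv :: "(dterm \<Rightarrow> 'k) \<Rightarrow> 'k" where
  "Sv x = (\<Sum>t\<in>{t. x t \<noteq> 0}. x t * F t)"

lemma Sv_sub: "finite A \<Longrightarrow> {t. x t \<noteq> 0} \<subseteq> A \<Longrightarrow> Sv x = (\<Sum>t\<in>A. x t * F t)"
  unfolding Sv_def by (rule sum.mono_neutral_left) auto

lemma Sv_two: "Sv (\<lambda>u. single a u - c * single b u) = F a - c * F b"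
proof -
  have "Sv (\<lambda>u. single a u - c * single b u) = (\<Sum>t\<in>{a,b}. (single a t - c * single b t) * F t)"
    by (rule Sv_sub) (auto simp: single_def)
  then show ?thesis by (cases "a = b") (auto simp: single_def algebra_simps)
qed

lemma dlc_two: "dhom n k l a \<Longrightarrow> dhom n k l b \<Longrightarrow> is_dlc n k l (\<lambda>u. single a u - c * single b u)"
  unfolding is_dlc_def
  by (rule conjI, rule finite_subset[of _ "{a,b}"]) (auto simp: single_def split: if_splits)

lemma ldiff_two: "ldiff a b = (\<lambda>u. single a u - 1 * single b u)"
  unfolding ldiff_def by simp

lemma Sv_ldiff: "Sv (ldiff a b) = F a - F b"
  using Sv_two[of a 1 b] unfolding ldiff_two by simp
lemma dlc_ldiff: "dhom n k l a \<Longrightarrow> dhom n k l b \<Longrightarrow> is_dlc n k l (ldiff a b)"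
  using dlc_two[of k l a b 1] unfolding ldiff_two by simp

lemma supp_lcomp: "{u. lcomp t x u \<noteq> 0} = DComp t ` {s. x s \<noteq> 0}"
proof (rule set_eqI)
  fix u show "u \<in> {u. lcomp t x u \<noteq> 0} \<longleftrightarrow> u \<in> DComp t ` {s. x s \<noteq> 0}"
    by (cases u) (auto simp: lcomp_def)
qed
lemma supp_rcomp: "{u. rcomp t x u \<noteq> 0} = (\<lambda>s. DComp s t) ` {s. x s \<noteq> 0}"
proof (rule set_eqI)
  fix u show "u \<in> {u. rcomp t x u \<noteq> 0} \<longleftrightarrow> u \<in> (\<lambda>s. DComp s t) ` {s. x s \<noteq> 0}"
    by (cases u) (auto simp: rcomp_def)
qed
lemma supp_ltens: "{u. ltens t x u \<noteq> 0} = DTens t ` {s. x s \<noteq> 0}"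
proof (rule set_eqI)
  fix u show "u \<in> {u. ltens t x u \<noteq> 0} \<longleftrightarrow> u \<in> DTens t ` {s. x s \<noteq> 0}"
    by (cases u) (auto simp: ltens_def)
qed
lemma supp_rtens: "{u. rtens t x u \<noteq> 0} = (\<lambda>s. DTens s t) ` {s. x s \<noteq> 0}"
proof (rule set_eqI)
  fix u show "u \<in> {u. rtens t x u \<noteq> 0} \<longleftrightarrow> u \<in> (\<lambda>s. DTens s t) ` {s. x s \<noteq> 0}"
    by (cases u) (auto simp: rtens_def)
qed

lemma fld:
  fixes J1 J2 J3 J4 J5 J6 J7 J8 fa fb fc :: 'k
  assumes "J1*J2*J8*J7 = J5*J6*J4*J3" "J3 \<noteq> 0" "J4 \<noteq> 0" "J7 \<noteq> 0" "J8 \<noteq> 0"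
  shows "J1 * (J2 * fa * fb * inverse J3) * fc * inverse J4 = J5 * fa * (J6 * fb * fc * inverse J7) * inverse J8"
proof -
  have "J1 * (J2 * fa * fb * inverse J3) * fc * inverse J4 = (J1*J2*J8*J7) * fa * fb * fc * inverse (J3*J4*J7*J8)"
    using assms by (simp add: field_simps)
  also have "\<dots> = (J5*J6*J4*J3) * fa * fb * fc * inverse (J3*J4*J7*J8)" using assms(1) by simp
  also have "\<dots> = J5 * fa * (J6 * fb * fc * inverse J7) * inverse J8"
    using assms by (simp add: field_simps)
  finally show ?thesis .
qed

lemma F_tassoc: assumes "dwt n a" "dwt n b" "dwt n c"
  shows "F (DTens (DTens a b) c) = F (DTens a (DTens b c))"
proof -
  have m: "ddom n a mod n = dcod n a mod n" "ddom n b mod n = dcod n b mod n" "ddom n c mod n = dcod n c mod n"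
    using assms by (auto simp: dwt_mod)
  note jj = JJ[OF m(1)[symmetric] m(2)[symmetric] m(3)[symmetric]]
  show ?thesis
    apply (simp only: Fterm.simps ddom.simps dcod.simps)
    apply (rule fld[OF jj])
    apply (simp_all add: J_nz)
    done
qed

lemma F_inter: assumes "ddom n a = dcod n b" "ddom n c = dcod n d"
  shows "F (DTens (DComp a b) (DComp c d)) = F (DComp (DTens a c) (DTens b d))"
proof -
  have "Jmon z n (ddom n a) (ddom n c) \<noteq> 0" by (rule J_nz)
  then show ?thesis using assms by (simp add: field_simps)
qed

lemma F_twist: "F (DTens (DId 1) Df) = z * F (DTens Df (DId 1))"
proof (cases "n = 1")
  case True
  then have "z = 1" using zn by simp
  have "z = 1" by fact
  show ?thesis apply (simp only: Fterm.simps J_eq ddom.simps dcod.simps) using True \<open>z = 1\<close> by simp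
next
  case False
  then have "1 mod n = 1" using n1 by simp
  then show ?thesis using n1 by (simp only: Fterm.simps J_eq ddom.simps dcod.simps) simp
qed

end

context ctx begin
lemma sound: "dnull z n k l x \<Longrightarrow> is_dlc n k l x \<and> Sv x = 0"
proof (induction rule: dnull.induct)
  case (zero k l)
  then show ?case by (simp add: is_dlc_def Sv_def)
next
  case (add k l x y)
  have fx: "finite {t. x t \<noteq> 0}" and fy: "finite {t. y t \<noteq> 0}" using add by (auto simp: is_dlc_def)
  have "is_dlc n k l (\<lambda>s. x s + y s)" unfolding is_dlc_def
  proof
    show "finite {s. x s + y s \<noteq> 0}"
      by (rule finite_subset[of _ "{t. x t \<noteq> 0} \<union> {t. y t \<noteq> 0}"]) (use fx fy in auto)
    show "\<forall>t. x t + y t \<noteq> 0 \<longrightarrow> dhom n k l t"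
      using add.IH unfolding is_dlc_def by (metis add.left_neutral add.right_neutral)
  qed
  moreover have "Sv (\<lambda>s. x s + y s) = Sv x + Sv y"
  proof -
    let ?A = "{t. x t \<noteq> 0} \<union> {t. y t \<noteq> 0}"
    have "Sv (\<lambda>s. x s + y s) = (\<Sum>t\<in>?A. (x t + y t) * F t)" by (rule Sv_sub) (use fx fy in auto)
    also have "\<dots> = (\<Sum>t\<in>?A. x t * F t) + (\<Sum>t\<in>?A. y t * F t)" by (simp add: algebra_simps sum.distrib)
    also have "(\<Sum>t\<in>?A. x t * F t) = Sv x" by (rule Sv_sub[symmetric]) (use fx fy in auto)
    also have "(\<Sum>t\<in>?A. y t * F t) = Sv y" by (rule Sv_sub[symmetric]) (use fx fy in auto)
    finally show ?thesis .
  qed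
  ultimately show ?case using add by simp
next
  case (smult k l x c)
  have fx: "finite {t. x t \<noteq> 0}" using smult by (auto simp: is_dlc_def)
  have "is_dlc n k l (\<lambda>s. c * x s)" unfolding is_dlc_def
  proof
    show "finite {s. c * x s \<noteq> 0}" by (rule finite_subset[OF _ fx]) auto
    show "\<forall>t. c * x t \<noteq> 0 \<longrightarrow> dhom n k l t"
      using smult.IH unfolding is_dlc_def by auto
  qed
  moreover have "Sv (\<lambda>s. c * x s) = c * Sv x"
  proof -
    have "Sv (\<lambda>s. c * x s) = (\<Sum>t\<in>{t. x t \<noteq> 0}. (c * x t) * F t)" by (rule Sv_sub) (use fx in auto)
    also have "\<dots> = c * Sv x" unfolding Sv_def by (simp add: sum_distrib_left algebra_simps)
    finally show ?thesis .
  qed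
  ultimately show ?case using smult by simp
next
  case (assoc j l a i b h c)
  then show ?case 
    by (auto simp: Sv_ldiff Sv_two intro!: dlc_ldiff dlc_two simp: dhom_def mult.assoc)
next
  case (idl k l a) then show ?case 
    by (auto simp: Sv_ldiff Sv_two intro!: dlc_ldiff dlc_two simp: dhom_def mult.assoc)
next
  case (idr k l a) then show ?case 
    by (auto simp: Sv_ldiff Sv_two intro!: dlc_ldiff dlc_two simp: dhom_def mult.assoc)
next
  case (tassoc k1 l1 a k2 l2 b k3 l3 c)
  have "F (DTens (DTens a b) c) = F (DTens a (DTens b c))"
    using tassoc by (intro F_tassoc) (auto simp: dhom_def)
  then show ?case  using tassoc
    by (auto simp: Sv_ldiff Sv_two intro!: dlc_ldiff dlc_two simp: dhom_def mult.assoc)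
next
  case (tunitl k l a) then show ?case 
    by (auto simp: Sv_ldiff Sv_two intro!: dlc_ldiff dlc_two simp: dhom_def mult.assoc)
next
  case (tunitr k l a) then show ?case 
    by (auto simp: Sv_ldiff Sv_two intro!: dlc_ldiff dlc_two simp: dhom_def mult.assoc)
next
  case (interchange j l a i b j' l' c i' d)
  have "F (DTens (DComp a b) (DComp c d)) = F (DComp (DTens a c) (DTens b d))"
    using interchange by (intro F_inter) (auto simp: dhom_def)
  then show ?case  using interchange
    by (auto simp: Sv_ldiff Sv_two intro!: dlc_ldiff dlc_two simp: dhom_def mult.assoc)
next
  case (idtens k l) then show ?case 
    by (auto simp: Sv_ldiff J_nz intro!: dlc_ldiff simp: dhom_def)
next
  case rel_fg then show ?case 
    by (auto simp: Sv_ldiff Sv_two intro!: dlc_ldiff dlc_two simp: dhom_def mult.assoc)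
next
  case rel_gf then show ?case 
    by (auto simp: Sv_ldiff Sv_two intro!: dlc_ldiff dlc_two simp: dhom_def mult.assoc)
next
  case rel_twist
  note F_twist
  then show ?case by (auto simp: Sv_ldiff Sv_two intro!: dlc_ldiff dlc_two simp: dhom_def mult.assoc)
next
  case (compL l m t k x)
  have fx: "finite {t. x t \<noteq> 0}" using compL by (auto simp: is_dlc_def)
  have hx: "\<And>s. x s \<noteq> 0 \<Longrightarrow> dhom n k l s" using compL by (auto simp: is_dlc_def)
  have "is_dlc n k m (lcomp t x)" unfolding is_dlc_def
  proof
    show "finite {u. lcomp t x u \<noteq> 0}" unfolding supp_lcomp using fx by simp
    show "\<forall>u. lcomp t x u \<noteq> 0 \<longrightarrow> dhom n k m u"
    proof (intro allI impI)
      fix u assume "lcomp t x u \<noteq> 0"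
      then have "u \<in> DComp t ` {s. x s \<noteq> 0}" using supp_lcomp by blast
      then obtain s where "u = DComp t s" "x s \<noteq> 0" by auto
      then show "dhom n k m u" using hx[of s] compL.hyps by (auto simp: dhom_def)
    qed
  qed
  moreover have "Sv (lcomp t x) = F t * Sv x"
  proof -
    have "Sv (lcomp t x) = (\<Sum>u\<in>DComp t ` {s. x s \<noteq> 0}. lcomp t x u * F u)"
      unfolding Sv_def supp_lcomp ..
    also have "\<dots> = (\<Sum>s\<in>{s. x s \<noteq> 0}. x s * (F t * F s))"
      by (subst sum.reindex) (auto simp: inj_on_def lcomp_def)
    also have "\<dots> = F t * Sv x" unfolding Sv_def by (simp add: sum_distrib_left algebra_simps)
    finally show ?thesis .
  qed
  ultimately show ?case using compL by simp
next
  case (compR j k t l x)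
  have fx: "finite {t. x t \<noteq> 0}" using compR by (auto simp: is_dlc_def)
  have hx: "\<And>s. x s \<noteq> 0 \<Longrightarrow> dhom n k l s" using compR by (auto simp: is_dlc_def)
  have "is_dlc n j l (rcomp t x)" unfolding is_dlc_def
  proof
    show "finite {u. rcomp t x u \<noteq> 0}" unfolding supp_rcomp using fx by simp
    show "\<forall>u. rcomp t x u \<noteq> 0 \<longrightarrow> dhom n j l u"
    proof (intro allI impI)
      fix u assume "rcomp t x u \<noteq> 0"
      then have "u \<in> (\<lambda>s. DComp s t) ` {s. x s \<noteq> 0}" using supp_rcomp by blast
      then obtain s where "u = DComp s t" "x s \<noteq> 0" by auto
      then show "dhom n j l u" using hx[of s] compR.hyps by (auto simp: dhom_def)
    qed
  qed
  moreover have "Sv (rcomp t x) = F t * Sv x"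
  proof -
    have "Sv (rcomp t x) = (\<Sum>u\<in>(\<lambda>s. DComp s t) ` {s. x s \<noteq> 0}. rcomp t x u * F u)"
      unfolding Sv_def supp_rcomp ..
    also have "\<dots> = (\<Sum>s\<in>{s. x s \<noteq> 0}. x s * (F s * F t))"
      by (subst sum.reindex) (auto simp: inj_on_def rcomp_def)
    also have "\<dots> = F t * Sv x" unfolding Sv_def by (simp add: sum_distrib_left algebra_simps)
    finally show ?thesis .
  qed
  ultimately show ?case using compR by simp
next
  case (tensL k' l' t k l x)
  have fx: "finite {t. x t \<noteq> 0}" using tensL by (auto simp: is_dlc_def)
  have hx: "\<And>s. x s \<noteq> 0 \<Longrightarrow> ddom n s = k \<and> dcod n s = l" using tensL by (auto simp: is_dlc_def dhom_def)
  have "is_dlc n (k' + k) (l' + l) (ltens t x)" unfolding is_dlc_def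
  proof
    show "finite {u. ltens t x u \<noteq> 0}" unfolding supp_ltens using fx by simp
    show "\<forall>u. ltens t x u \<noteq> 0 \<longrightarrow> dhom n (k' + k) (l' + l) u"
    proof (intro allI impI)
      fix u assume "ltens t x u \<noteq> 0"
      then have "u \<in> DTens t ` {s. x s \<noteq> 0}" using supp_ltens by blast
      then obtain s where "u = DTens t s" "x s \<noteq> 0" by auto
      then show "dhom n (k' + k) (l' + l) u" using tensL.IH hx[of s] tensL.hyps by (auto simp: dhom_def is_dlc_def)
    qed
  qed
  moreover have "Sv (ltens t x) = (Jmon z n (dcod n t) l * F t * inverse (Jmon z n (ddom n t) k)) * Sv x"
  proof -
    have "Sv (ltens t x) = (\<Sum>u\<in>DTens t ` {s. x s \<noteq> 0}. ltens t x u * F u)"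
      unfolding Sv_def supp_ltens ..
    also have "\<dots> = (\<Sum>s\<in>{s. x s \<noteq> 0}. x s * F (DTens t s))"
      by (subst sum.reindex) (auto simp: inj_on_def ltens_def)
    also have "\<dots> = (\<Sum>s\<in>{s. x s \<noteq> 0}. (Jmon z n (dcod n t) l * F t * inverse (Jmon z n (ddom n t) k)) * (x s * F s))"
      by (rule sum.cong) (auto simp: hx algebra_simps)
    also have "\<dots> = (Jmon z n (dcod n t) l * F t * inverse (Jmon z n (ddom n t) k)) * Sv x" unfolding Sv_def by (simp add: sum_distrib_left)
    finally show ?thesis .
  qed
  ultimately show ?case using tensL by simp
next
  case (tensR k' l' t k l x)
  have fx: "finite {t. x t \<noteq> 0}" using tensR by (auto simp: is_dlc_def)
  have hx: "\<And>s. x s \<noteq> 0 \<Longrightarrow> ddom n s = k \<and> dcod n s = l" using tensR by (auto simp: is_dlc_def dhom_def)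
  have "is_dlc n (k + k') (l + l') (rtens t x)" unfolding is_dlc_def
  proof
    show "finite {u. rtens t x u \<noteq> 0}" unfolding supp_rtens using fx by simp
    show "\<forall>u. rtens t x u \<noteq> 0 \<longrightarrow> dhom n (k + k') (l + l') u"
    proof (intro allI impI)
      fix u assume "rtens t x u \<noteq> 0"
      then have "u \<in> (\<lambda>s. DTens s t) ` {s. x s \<noteq> 0}" using supp_rtens by blast
      then obtain s where "u = DTens s t" "x s \<noteq> 0" by auto
      then show "dhom n (k + k') (l + l') u" using tensR.IH hx[of s] tensR.hyps by (auto simp: dhom_def is_dlc_def)
    qed
  qed
  moreover have "Sv (rtens t x) = (Jmon z n l (dcod n t) * F t * inverse (Jmon z n k (ddom n t))) * Sv x"
  proof -
    have "Sv (rtens t x) = (\<Sum>u\<in>(\<lambda>s. DTens s t) ` {s. x s \<noteq> 0}. rtens t x u * F u)"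
      unfolding Sv_def supp_rtens ..
    also have "\<dots> = (\<Sum>s\<in>{s. x s \<noteq> 0}. x s * F (DTens s t))"
      by (subst sum.reindex) (auto simp: inj_on_def rtens_def)
    also have "\<dots> = (\<Sum>s\<in>{s. x s \<noteq> 0}. (Jmon z n l (dcod n t) * F t * inverse (Jmon z n k (ddom n t))) * (x s * F s))"
      by (rule sum.cong) (auto simp: hx algebra_simps)
    also have "\<dots> = (Jmon z n l (dcod n t) * F t * inverse (Jmon z n k (ddom n t))) * Sv x" unfolding Sv_def by (simp add: sum_distrib_left)
    finally show ?thesis .
  qed
  ultimately show ?case using tensR by simp
qed

end

context ctx begin

lemma comb: "finite A \<Longrightarrow> (\<forall>t\<in>A. dnull z n k l (\<lambda>u. single t u - c t * single N u)) \<Longrightarrow>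
  dnull z n k l (\<lambda>u. \<Sum>t\<in>A. a t * (single t u - c t * single N u))"
proof (induction A rule: finite_induct)
  case empty
  then show ?case by (simp add: dnull.zero)
next
  case (insert t A)
  have h1: "dnull z n k l (\<lambda>u. single t u - c t * single N u)" using insert by simp
  have "dnull z n k l (\<lambda>u. a t * (single t u - c t * single N u) + (\<Sum>t\<in>A. a t * (single t u - c t * single N u)))"
    by (rule dnull.add[OF dnull.smult[OF h1] insert.IH]) (use insert in simp)
  then show ?case using insert by simp
qed

lemma decomp:
  assumes x: "is_dlc n k 0 x"
  shows "\<exists>C. dnull z n k 0 (\<lambda>u. x u - C * single (Nf k 0) u) \<and> Sv x = C * F (Nf k 0)"
proof -
  let ?N = "Nf k 0"
  let ?S = "{t. x t \<noteq> 0}"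
  have fin: "finite ?S" and hom: "\<And>t. t \<in> ?S \<Longrightarrow> dhom n k 0 t" using x by (auto simp: is_dlc_def)
  have "\<forall>t\<in>?S. \<exists>c. Req t ?N c"
  proof
    fix t assume "t \<in> ?S"
    then have "dhom n k 0 t" by (rule hom)
    then have "Eq t ?N" using span[of t] by (auto simp: dhom_def)
    then show "\<exists>c. Req t ?N c" unfolding Eq_def by auto
  qed
  then obtain c where c: "\<And>t. t \<in> ?S \<Longrightarrow> Req t ?N (c t)" by metis
  have dn: "\<And>t. t \<in> ?S \<Longrightarrow> dnull z n k 0 (\<lambda>u. single t u - c t * single ?N u)"
    using c hom unfolding Req_def dhom_def by fastforce
  have Ft: "\<And>t. t \<in> ?S \<Longrightarrow> F t = c t * F ?N"
  proof -
    fix t assume "t \<in> ?S"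
    then have "Sv (\<lambda>u. single t u - c t * single ?N u) = 0" using sound dn by blast
    then show "F t = c t * F ?N" by (simp add: Sv_two)
  qed
  define C where "C = (\<Sum>t\<in>?S. x t * c t)"
  have "dnull z n k 0 (\<lambda>u. \<Sum>t\<in>?S. x t * (single t u - c t * single ?N u))"
    by (rule comb[OF fin]) (use dn in blast)
  moreover have "(\<lambda>u. \<Sum>t\<in>?S. x t * (single t u - c t * single ?N u)) = (\<lambda>u. x u - C * single ?N u)"
  proof
    fix u
    have "(\<Sum>t\<in>?S. x t * (single t u - c t * single ?N u)) = (\<Sum>t\<in>?S. x t * single t u) - (\<Sum>t\<in>?S. x t * c t) * single ?N u"
      by (simp add: right_diff_distrib sum_subtractf sum_distrib_right mult.assoc)
    also have "(\<Sum>t\<in>?S. x t * single t u) = x u"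
    proof -
      have "(\<Sum>t\<in>?S. x t * single t u) = (\<Sum>t\<in>?S. if t = u then x t else 0)"
        by (rule sum.cong) (auto simp: single_def)
      also have "\<dots> = x u" using fin by (simp add: sum.delta')
      finally show ?thesis .
    qed
    finally show "(\<Sum>t\<in>?S. x t * (single t u - c t * single ?N u)) = x u - C * single ?N u" unfolding C_def .
  qed
  ultimately have "dnull z n k 0 (\<lambda>u. x u - C * single ?N u)" by simp
  moreover have "Sv x = C * F ?N"
    unfolding Sv_def C_def using Ft by (simp add: sum_distrib_right mult.assoc)
  ultimately show ?thesis by blast
qed

lemma main:
  assumes x: "is_dlc n k 0 x" and y: "is_dlc n k 0 y" and eq: "Fhom z n k 0 x = Fhom z n k 0 y"
  shows "dnull z n k 0 (\<lambda>s. x s - y s)"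
proof (cases "k mod n = 0")
  case False
  have "\<And>t. x t = 0" "\<And>t. y t = 0"
    using x y False dwt_mod unfolding is_dlc_def dhom_def by fastforce+
  then have "(\<lambda>s. x s - y s) = (\<lambda>_. 0)" by simp
  then show ?thesis using dnull.zero by metis
next
  case True
  obtain Cx where cx: "dnull z n k 0 (\<lambda>u. x u - Cx * single (Nf k 0) u)" "Sv x = Cx * F (Nf k 0)"
    using decomp[OF x] by blast
  obtain Cy where cy: "dnull z n k 0 (\<lambda>u. y u - Cy * single (Nf k 0) u)" "Sv y = Cy * F (Nf k 0)"
    using decomp[OF y] by blast
  have "Sv x = Sv y" using eq True unfolding Fhom_def Sv_def by simp
  then have "Cx = Cy" using cx(2) cy(2) F_nz by simp
  have "dnull z n k 0 (\<lambda>u. (x u - Cx * single (Nf k 0) u) + (-1) * (y u - Cy * single (Nf k 0) u))"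
    by (rule dnull.add[OF cx(1) dnull.smult[OF cy(1)]])
  moreover have "(\<lambda>u. (x u - Cx * single (Nf k 0) u) + (-1) * (y u - Cy * single (Nf k 0) u)) = (\<lambda>s. x s - y s)"
    using \<open>Cx = Cy\<close> by (auto simp: algebra_simps)
  ultimately show ?thesis by simp
qed

end

theorem mainTheorem13:
  fixes z :: "'k::field_char_0" and n :: nat
  assumes "alg_closed TYPE('k)"
    and "n \<ge> 1"
    and "z ^ n = 1"
  shows "\<forall>k x y. is_dlc n k 0 x \<longrightarrow> is_dlc n k 0 y \<longrightarrow>
           Fhom z n k 0 x = Fhom z n k 0 y \<longrightarrow> dnull z n k 0 (\<lambda>s. x s - y s)"
proof -
  interpret ctx z n using assms(2,3) by unfold_locales
  show ?thesis using main by blast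
qed

end
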